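(* For every $\rho\in\mathfrak{M}_L^1(\mathbb{R}^d)$, $\Upsilon_{-2,2}(\mathcal{A}_1(\rho))=\mathcal{A}_1(\Upsilon^0(\rho))$.
   Context: A Lévy measure on $\mathbb{R}^d$ is a measure $\nu$ with $\nu(\{0\})=0$ and $\int(1\wedge|x|^2)\nu(\mathrm{d}x)<\infty$; $\mathfrak{M}_L^1(\mathbb{R}^d)$ is the class of those with $\int(1\wedge|x|)\nu(\mathrm{d}x)<\infty$. $a_1(r;s)=2\pi^{-1}(s-r^2)^{-1/2}$ for $0<r<s^{1/2}$, $0$ otherwise; $\mathcal{A}_1(\nu)(B)=\int_{\mathbb{R}^d\setminus\{0\}}\nu(\mathrm{d}x)\int_0^\infty a_1(r;|x|)1_B(rx/|x|)\mathrm{d}r$. $\Upsilon^0(\nu)(B)=\int_0^\infty\nu(u^{-1}B)e^{-u}\mathrm{d}u$ and $\Upsilon_{-2,2}(\nu)(B)=\int_0^\infty\nu(s^{-1}B)\,2se^{-s^2}\mathrm{d}s$, where $u^{-1}B=\{u^{-1}x:x\in B\}$. *)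

theory Defs
  imports "HOL-Analysis.Analysis"
begin

definition levy_measure :: "'a::euclidean_space measure \<Rightarrow> bool" where
  "levy_measure \<nu> \<longleftrightarrow> sets \<nu> = sets borel \<and> emeasure \<nu> {0} = 0 \<and>
     (\<integral>\<^sup>+ x. ennreal (min 1 (norm x ^ 2)) \<partial>\<nu>) < \<infinity>"

definition levy_measure_L1 :: "'a::euclidean_space measure \<Rightarrow> bool" where
  "levy_measure_L1 \<nu> \<longleftrightarrow> levy_measure \<nu> \<and>
     (\<integral>\<^sup>+ x. ennreal (min 1 (norm x)) \<partial>\<nu>) < \<infinity>"

definition a1 :: "real \<Rightarrow> real \<Rightarrow> real" where
  "a1 r s = (if 0 < r \<and> r < sqrt s then 2 / pi * (1 / sqrt (s - r^2)) else 0)"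

definition A1 :: "'a::euclidean_space measure \<Rightarrow> 'a measure" where
  "A1 \<nu> = measure_of UNIV (sets borel)
     (\<lambda>B. \<integral>\<^sup>+ x. indicator (- {0}) x *
            (\<integral>\<^sup>+ r. indicator {0<..} r * ennreal (a1 r (norm x)) *
                     indicator B ((r / norm x) *\<^sub>R x) \<partial>lborel) \<partial>\<nu>)"

definition Upsilon0 :: "'a::euclidean_space measure \<Rightarrow> 'a measure" where
  "Upsilon0 \<nu> = measure_of UNIV (sets borel)
     (\<lambda>B. \<integral>\<^sup>+ u. indicator {0<..} u * emeasure \<nu> ((\<lambda>x. u *\<^sub>R x) -` B) *
            ennreal (exp (- u)) \<partial>lborel)"

definition Upsilon_m2_2 :: "'a::euclidean_space measure \<Rightarrow> 'a measure" where
  "Upsilon_m2_2 \<nu> = measure_of UNIV (sets borel)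
     (\<lambda>B. \<integral>\<^sup>+ s. indicator {0<..} s * emeasure \<nu> ((\<lambda>x. s *\<^sub>R x) -` B) *
            ennreal (2 * s * exp (- (s^2))) \<partial>lborel)"

end

theory Submission
  imports Defs
begin


lemma subst_sq_aux:
  fixes f :: "real \<Rightarrow> ennreal" and n :: nat
  assumes [measurable]: "f \<in> borel_measurable borel" and n: "n > 0"
  shows "(\<integral>\<^sup>+u. (indicator {0<..} u * f (sqrt u)) * indicator {0..real n ^ 2} u \<partial>lborel)
       = (\<integral>\<^sup>+y. (indicator {0<..} y * f y * ennreal (2*y)) * indicator {0..real n} y \<partial>lborel)"
proof -
  have "(\<integral>\<^sup>+u. (indicator {0<..} u * f (sqrt u)) * indicator {(\<lambda>x. x^2) 0..(\<lambda>x. x^2) (real n)} u \<partial>lborel)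
     = (\<integral>\<^sup>+x. (indicator {0<..} (x^2) * f (sqrt (x^2))) * ennreal (2*x) * indicator {0..real n} x \<partial>lborel)"
    by (rule nn_integral_substitution_aux[where g'="\<lambda>x. 2*x"])
       (auto intro!: derivative_eq_intros continuous_intros simp: n)
  also have "\<dots> = (\<integral>\<^sup>+y. (indicator {0<..} y * f y * ennreal (2*y)) * indicator {0..real n} y \<partial>lborel)"
    by (intro nn_integral_cong) (auto simp: indicator_def)
  finally show ?thesis by simp
qed

lemma sup_ind_lemma:
  fixes g :: "real \<Rightarrow> ennreal" and h :: "nat \<Rightarrow> real"
  assumes h1: "\<And>x. x \<le> 0 \<Longrightarrow> g x = 0" and h2: "\<And>x. \<exists>n. x \<le> h n"
  shows "(SUP n. g x * indicator {0..h n} x) = g x"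
proof (rule antisym)
  have "g x * indicator {0..h n} x \<le> g x" for n
    by (cases "x \<in> {0..h n}") auto
  thus "(SUP n. g x * indicator {0..h n} x) \<le> g x"
    by (rule SUP_least)
next
  obtain n where n: "x \<le> h n" using h2 by blast
  show "g x \<le> (SUP n. g x * indicator {0..h n} x)"
  proof (cases "x \<le> 0")
    case True thus ?thesis using h1[OF True] by simp
  next
    case False
    hence "x \<in> {0..h n}" using n by auto
    hence "g x = g x * indicator {0..h n} x" by simp
    also have "\<dots> \<le> (SUP n. g x * indicator {0..h n} x)" by (rule SUP_upper) simp
    finally show ?thesis .
  qed
qed

lemma subst_sq:
  fixes f :: "real \<Rightarrow> ennreal"
  assumes [measurable]: "f \<in> borel_measurable borel"
  shows "(\<integral>\<^sup>+u. indicator {0<..} u * f (sqrt u) \<partial>lborel)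
       = (\<integral>\<^sup>+y. indicator {0<..} y * f y * ennreal (2*y) \<partial>lborel)"
proof -
  have indmono: "c * indicator A x \<le> c * indicator B x" if "A \<subseteq> B" for c :: ennreal and A B :: "real set" and x
    using that by (cases "x \<in> A"; cases "x \<in> B") auto
  have inc1: "incseq (\<lambda>n x. (indicator {0<..} x * f (sqrt x)) * indicator {0..real (Suc n) ^ 2} x :: ennreal)"
  proof (rule incseq_SucI, rule le_funI)
    fix n x
    have "real (Suc n) ^ 2 \<le> real (Suc (Suc n)) ^ 2" by (intro power_mono) auto
    thus "(indicator {0<..} x * f (sqrt x)) * indicator {0..real (Suc n) ^ 2} x
       \<le> (indicator {0<..} x * f (sqrt x)) * indicator {0..real (Suc (Suc n)) ^ 2} x"
      by (intro indmono) auto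
  qed
  have inc2: "incseq (\<lambda>n x. (indicator {0<..} x * f x * ennreal (2*x)) * indicator {0..real (Suc n)} x :: ennreal)"
    by (rule incseq_SucI, rule le_funI, rule indmono) auto
  have ex1: "\<exists>n. x \<le> real (Suc n) ^ 2" for x :: real
  proof -
    obtain n where "x \<le> real n" using real_arch_simple by blast
    hence "x \<le> real (Suc n)" by simp
    also have "\<dots> \<le> real (Suc n) ^ 2" by (simp add: power2_eq_square)
    finally show ?thesis by blast
  qed
  have ex2: "\<exists>n. x \<le> real (Suc n)" for x :: real
  proof -
    obtain n where "x \<le> real n" using real_arch_simple by blast
    hence "x \<le> real (Suc n)" by simp
    thus ?thesis by blast
  qed
  have "(\<integral>\<^sup>+u. indicator {0<..} u * f (sqrt u) \<partial>lborel)
      = (\<integral>\<^sup>+u. (SUP n. (indicator {0<..} u * f (sqrt u)) * indicator {0..real (Suc n) ^ 2} u) \<partial>lborel)"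
    apply (intro nn_integral_cong) apply (rule sup_ind_lemma[where h="\<lambda>n. real (Suc n) ^ 2", symmetric]) apply (simp add: indicator_def) apply (rule ex1) done
  also have "\<dots> = (SUP n. \<integral>\<^sup>+u. (indicator {0<..} u * f (sqrt u)) * indicator {0..real (Suc n) ^ 2} u \<partial>lborel)"
    by (rule nn_integral_monotone_convergence_SUP[OF inc1]) simp
  also have "\<dots> = (SUP n. \<integral>\<^sup>+y. (indicator {0<..} y * f y * ennreal (2*y)) * indicator {0..real (Suc n)} y \<partial>lborel)"
    by (subst subst_sq_aux) auto
  also have "\<dots> = (\<integral>\<^sup>+y. (SUP n. (indicator {0<..} y * f y * ennreal (2*y)) * indicator {0..real (Suc n)} y) \<partial>lborel)"
    by (rule nn_integral_monotone_convergence_SUP[OF inc2, symmetric]) simp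
  also have "\<dots> = (\<integral>\<^sup>+y. indicator {0<..} y * f y * ennreal (2*y) \<partial>lborel)"
    apply (intro nn_integral_cong) apply (rule sup_ind_lemma[where h="\<lambda>n. real (Suc n)"]) apply (simp add: indicator_def) apply (rule ex2) done
  finally show ?thesis .
qed



lemma a1_measurable[measurable]:
  assumes [measurable]: "f \<in> borel_measurable M" "g \<in> borel_measurable M"
  shows "(\<lambda>x. a1 (f x) (g x)) \<in> borel_measurable M"
  unfolding a1_def by measurable

definition kk :: "real \<Rightarrow> real" where
  "kk v = indicator {0<..<1} v * (2 / pi / sqrt (1 - v^2))"

lemma kk_measurable[measurable]: "kk \<in> borel_measurable borel"
  unfolding kk_def by measurable

lemma kk_nonneg: "kk v \<ge> 0"
proof (cases "v \<in> {0<..<1}")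
  case True
  hence "v^2 < 1" by (simp add: power_less_one_iff abs_less_iff power2_less_1_iff)
  hence "sqrt (1 - v^2) > 0" by simp
  thus ?thesis using True by (simp add: kk_def)
qed (simp add: kk_def)

lemma a1_scale_point:
  fixes c v :: real assumes c: "c > 0"
  shows "sqrt c * (indicator {0<..} (sqrt c * v) * a1 (sqrt c * v) c) = kk v"
proof (cases "v \<in> {0<..<1}")
  case True
  have sc: "sqrt c > 0" using c by simp
  have p1: "0 < sqrt c * v" using True sc by simp
  have p2: "sqrt c * v < sqrt c" using True sc by simp
  have "c - (sqrt c * v)^2 = c * (1 - v^2)" using c by (simp add: power_mult_distrib algebra_simps)
  hence sq: "sqrt (c - (sqrt c * v)^2) = sqrt c * sqrt (1 - v^2)" by (simp add: real_sqrt_mult)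
  have "v^2 < 1" using True by (simp add: power2_less_1_iff abs_less_iff)
  hence "sqrt (1 - v^2) > 0" by simp
  thus ?thesis using True p1 p2 sc unfolding a1_def kk_def sq by (simp add: field_simps)
next
  case False
  have sc: "sqrt c > 0" using c by simp
  show ?thesis
  proof (cases "v \<le> 0")
    case True
    hence "\<not> 0 < sqrt c * v" using sc by (simp add: mult_le_0_iff not_less)
    thus ?thesis using False by (simp add: kk_def)
  next
    case f2: False
    hence "v \<ge> 1" using False by auto
    hence "\<not> sqrt c * v < sqrt c" using sc by (simp add: not_less)
    thus ?thesis using False by (simp add: kk_def a1_def)
  qed
qed

lemma a1_nonneg: "a1 r s \<ge> 0"
proof (cases "0 < r \<and> r < sqrt s")
  case True
  hence "0 < sqrt s" by linarith
  hence sp: "s > 0" by simp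
  have "r^2 < (sqrt s)^2" using True by (intro power_strict_mono) auto
  hence "r^2 < s" using sp by simp
  hence "sqrt (s - r^2) > 0" by simp
  thus ?thesis using True unfolding a1_def by simp
next
  case False thus ?thesis unfolding a1_def by (simp only: if_False)
qed

lemma scale_a1:
  fixes G :: "real \<Rightarrow> ennreal" and c :: real
  assumes [measurable]: "G \<in> borel_measurable borel" and c: "c > 0"
  shows "(\<integral>\<^sup>+r. indicator {0<..} r * ennreal (a1 r c) * G r \<partial>lborel)
       = (\<integral>\<^sup>+v. ennreal (kk v) * G (sqrt c * v) \<partial>lborel)"
proof -
  have sc: "sqrt c \<noteq> 0" using c by simp
  have "(\<integral>\<^sup>+r. indicator {0<..} r * ennreal (a1 r c) * G r \<partial>lborel)
     = ennreal \<bar>sqrt c\<bar> * (\<integral>\<^sup>+v. indicator {0<..} (0 + sqrt c * v) * ennreal (a1 (0 + sqrt c * v) c) * G (0 + sqrt c * v) \<partial>lborel)"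
    by (rule nn_integral_real_affine[OF _ sc]) measurable
  also have "\<dots> = (\<integral>\<^sup>+v. ennreal (sqrt c) * (indicator {0<..} (sqrt c * v) * ennreal (a1 (sqrt c * v) c) * G (sqrt c * v)) \<partial>lborel)"
    using c by (subst nn_integral_cmult) auto
  also have "\<dots> = (\<integral>\<^sup>+v. ennreal (kk v) * G (sqrt c * v) \<partial>lborel)"
  proof (rule nn_integral_cong)
    fix v
    have "ennreal (sqrt c) * (indicator {0<..} (sqrt c * v) * ennreal (a1 (sqrt c * v) c))
        = ennreal (sqrt c * (indicator {0<..} (sqrt c * v) * a1 (sqrt c * v) c))"
      using c a1_nonneg by (simp add: ennreal_mult' ennreal_indicator)
    also have "\<dots> = ennreal (kk v)" using a1_scale_point[OF c] by simp
    finally show "ennreal (sqrt c) * (indicator {0<..} (sqrt c * v) * ennreal (a1 (sqrt c * v) c) * G (sqrt c * v))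
        = ennreal (kk v) * G (sqrt c * v)" by (simp add: mult.assoc[symmetric])
  qed
  finally show ?thesis .
qed



lemma core:
  fixes G :: "real \<Rightarrow> ennreal" and t :: real
  assumes [measurable]: "G \<in> borel_measurable borel" and t: "t > 0"
  shows "(\<integral>\<^sup>+x. indicator {0<..} x * ennreal (2*x*exp(-(x^2))) *
            (\<integral>\<^sup>+r. indicator {0<..} r * ennreal (a1 r t) * G (x*r) \<partial>lborel) \<partial>lborel)
       = (\<integral>\<^sup>+u. indicator {0<..} u * ennreal (exp (-u)) *
            (\<integral>\<^sup>+r. indicator {0<..} r * ennreal (a1 r (u*t)) * G r \<partial>lborel) \<partial>lborel)"
proof -
  define J where "J y = (\<integral>\<^sup>+v. ennreal (kk v) * G (y * v) \<partial>lborel)" for y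
  have Jm[measurable]: "J \<in> borel_measurable borel"
    unfolding J_def by measurable
  have L: "(\<integral>\<^sup>+r. indicator {0<..} r * ennreal (a1 r t) * G (x*r) \<partial>lborel) = J (x * sqrt t)" for x
    unfolding J_def by (subst scale_a1[OF _ t]) (auto simp: mult.assoc)
  have R: "indicator {0<..} u * ennreal (exp (-u)) *
            (\<integral>\<^sup>+r. indicator {0<..} r * ennreal (a1 r (u*t)) * G r \<partial>lborel)
         = indicator {0<..} u * (ennreal (exp (- ((sqrt u)^2))) * J (sqrt u * sqrt t))" for u
  proof (cases "u > 0")
    case True
    hence "u * t > 0" using t by simp
    hence "(\<integral>\<^sup>+r. indicator {0<..} r * ennreal (a1 r (u*t)) * G r \<partial>lborel) = J (sqrt u * sqrt t)"
      unfolding J_def by (subst scale_a1) (auto simp: real_sqrt_mult)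
    thus ?thesis using True by (simp add: mult.assoc)
  qed simp
  have "(\<integral>\<^sup>+u. indicator {0<..} u * ennreal (exp (-u)) *
            (\<integral>\<^sup>+r. indicator {0<..} r * ennreal (a1 r (u*t)) * G r \<partial>lborel) \<partial>lborel)
      = (\<integral>\<^sup>+u. indicator {0<..} u * (ennreal (exp (- ((sqrt u)^2))) * J (sqrt u * sqrt t)) \<partial>lborel)"
    by (simp only: R)
  also have "\<dots> = (\<integral>\<^sup>+y. indicator {0<..} y * (ennreal (exp (- (y^2))) * J (y * sqrt t)) * ennreal (2*y) \<partial>lborel)"
    by (rule subst_sq[where f="\<lambda>y. ennreal (exp (- (y^2))) * J (y * sqrt t)"]) measurable
  also have "\<dots> = (\<integral>\<^sup>+x. indicator {0<..} x * ennreal (2*x*exp(-(x^2))) *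
            (\<integral>\<^sup>+r. indicator {0<..} r * ennreal (a1 r t) * G (x*r) \<partial>lborel) \<partial>lborel)"
  proof (rule nn_integral_cong)
    fix x :: real
    show "indicator {0<..} x * (ennreal (exp (- (x^2))) * J (x * sqrt t)) * ennreal (2*x)
        = indicator {0<..} x * ennreal (2*x*exp(-(x^2))) *
            (\<integral>\<^sup>+r. indicator {0<..} r * ennreal (a1 r t) * G (x*r) \<partial>lborel)"
    proof (cases "x > 0")
      case True
      hence "ennreal (2*x*exp(-(x^2))) = ennreal (exp (- (x^2))) * ennreal (2*x)"
        by (simp add: ennreal_mult'[symmetric] mult.commute)
      thus ?thesis unfolding L using True by (simp add: mult_ac)
    qed simp
  qed
  finally show ?thesis by simp
qed



lemma measure_of_borel:
  fixes M :: "'a::topological_space measure"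
  assumes sM: "sets M = sets borel" and eq: "\<And>B. B \<in> sets borel \<Longrightarrow> F B = emeasure M B"
  shows "measure_of UNIV (sets borel) F = M"
proof -
  have sp: "space M = UNIV" using sets_eq_imp_space_eq[OF sM] by simp
  have ss: "sigma_sets UNIV (sets borel) = (sets borel :: 'a set set)"
    using sets.sigma_sets_eq[of "borel :: 'a measure"] by simp
  have "measure_of UNIV (sets borel) F = measure_of UNIV (sets borel) (emeasure M)"
    by (rule measure_of_eq) (auto simp: ss eq)
  also have "\<dots> = measure_of (space M) (sets M) (emeasure M)" by (simp add: sp sM)
  also have "\<dots> = M" by (rule measure_of_of_measure)
  finally show ?thesis .
qed

definition phi :: "'a::euclidean_space \<Rightarrow> real \<Rightarrow> 'a" where
  "phi x r = (r / norm x) *\<^sub>R x"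

definition hh :: "'a::euclidean_space \<Rightarrow> real \<Rightarrow> ennreal" where
  "hh x r = indicator (- {0}) x * (indicator {0<..} r * ennreal (a1 r (norm x)))"

lemma phi_measurable[measurable]: "(\<lambda>(x, r). phi x r) \<in> borel_measurable (borel \<Otimes>\<^sub>M borel)"
  unfolding phi_def by measurable

lemma hh_measurable[measurable]: "(\<lambda>(x, r). hh x r) \<in> borel_measurable (borel \<Otimes>\<^sub>M borel)"
  unfolding hh_def by measurable

lemma A1_emeasure:
  fixes \<nu> :: "'a::euclidean_space measure"
  assumes s\<nu>: "sets \<nu> = sets borel" and B: "B \<in> sets borel"
  shows "emeasure (A1 \<nu>) B = (\<integral>\<^sup>+x. (\<integral>\<^sup>+r. hh x r * indicator B (phi x r) \<partial>lborel) \<partial>\<nu>)"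
proof -
  let ?M = "distr (density (\<nu> \<Otimes>\<^sub>M lborel) (\<lambda>(x,r). hh x r)) borel (\<lambda>(x,r). phi x r)"
  have sp: "sets (\<nu> \<Otimes>\<^sub>M lborel) = sets (borel \<Otimes>\<^sub>M borel)"
    by (intro sets_pair_measure_cong s\<nu>) simp
  have mphi: "(\<lambda>(x, r). phi x r) \<in> borel_measurable (\<nu> \<Otimes>\<^sub>M lborel)"
    using measurable_cong_sets[OF sp refl] phi_measurable by blast
  have mhh: "(\<lambda>(x, r). hh x r) \<in> borel_measurable (\<nu> \<Otimes>\<^sub>M lborel)"
    using measurable_cong_sets[OF sp refl] hh_measurable by blast
  have mprod: "(\<lambda>p. (case p of (x, r) \<Rightarrow> hh x r) * indicator B (case p of (x,r) \<Rightarrow> phi x r)) \<in> borel_measurable (\<nu> \<Otimes>\<^sub>M lborel)"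
    using mhh mphi B by measurable
  have em: "emeasure ?M C = (\<integral>\<^sup>+x. (\<integral>\<^sup>+r. hh x r * indicator C (phi x r) \<partial>lborel) \<partial>\<nu>)"
    if C: "C \<in> sets borel" for C
  proof -
    have mprodC: "(\<lambda>p. (case p of (x, r) \<Rightarrow> hh x r) * indicator C (case p of (x,r) \<Rightarrow> phi x r)) \<in> borel_measurable (\<nu> \<Otimes>\<^sub>M lborel)"
      using mhh mphi C by measurable
    have pre: "(\<lambda>(x,r). phi x r) -` C \<inter> space (density (\<nu> \<Otimes>\<^sub>M lborel) (\<lambda>(x,r). hh x r)) \<in> sets (\<nu> \<Otimes>\<^sub>M lborel)"
      using measurable_sets[OF mphi C] by simp
    have "emeasure ?M C = emeasure (density (\<nu> \<Otimes>\<^sub>M lborel) (\<lambda>(x,r). hh x r)) ((\<lambda>(x,r). phi x r) -` C \<inter> space (density (\<nu> \<Otimes>\<^sub>M lborel) (\<lambda>(x,r). hh x r)))"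
      by (rule emeasure_distr) (use mphi C in auto)
    also have "\<dots> = (\<integral>\<^sup>+p. (case p of (x,r) \<Rightarrow> hh x r) * indicator ((\<lambda>(x,r). phi x r) -` C \<inter> space (density (\<nu> \<Otimes>\<^sub>M lborel) (\<lambda>(x,r). hh x r))) p \<partial>(\<nu> \<Otimes>\<^sub>M lborel))"
      by (rule emeasure_density[OF mhh]) (use pre in simp)
    also have "\<dots> = (\<integral>\<^sup>+p. (case p of (x, r) \<Rightarrow> hh x r) * indicator C (case p of (x,r) \<Rightarrow> phi x r) \<partial>(\<nu> \<Otimes>\<^sub>M lborel))"
      by (intro nn_integral_cong) (auto simp: space_pair_measure indicator_def split: prod.splits)
    also have "\<dots> = (\<integral>\<^sup>+x. (\<integral>\<^sup>+r. hh x r * indicator C (phi x r) \<partial>lborel) \<partial>\<nu>)"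
      using lborel.nn_integral_fst[OF mprodC] by simp
    finally show ?thesis .
  qed
  have "A1 \<nu> = ?M"
    unfolding A1_def
  proof (rule measure_of_borel)
    show "sets ?M = sets borel" by simp
    fix C :: "'a set" assume C: "C \<in> sets borel"
    show "(\<integral>\<^sup>+x. indicator (- {0}) x *
            (\<integral>\<^sup>+r. indicator {0<..} r * ennreal (a1 r (norm x)) * indicator C ((r / norm x) *\<^sub>R x) \<partial>lborel) \<partial>\<nu>)
          = emeasure ?M C"
      unfolding em[OF C]
    proof (rule nn_integral_cong)
      fix x :: 'a
      show "indicator (- {0}) x *
            (\<integral>\<^sup>+r. indicator {0<..} r * ennreal (a1 r (norm x)) * indicator C ((r / norm x) *\<^sub>R x) \<partial>lborel)
          = (\<integral>\<^sup>+r. hh x r * indicator C (phi x r) \<partial>lborel)"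
        by (cases "x = 0") (simp_all add: hh_def phi_def)
    qed
  qed
  thus ?thesis using em[OF B] by simp
qed



lemma Upsilon0_distr:
  fixes \<nu> :: "'a::euclidean_space measure"
  assumes sf: "sigma_finite_measure \<nu>" and s\<nu>: "sets \<nu> = sets borel"
  shows "Upsilon0 \<nu> = distr (density (lborel \<Otimes>\<^sub>M \<nu>) (\<lambda>(u,x). indicator {0<..} u * ennreal (exp (-u)))) borel (\<lambda>(u,x). u *\<^sub>R x)"
    (is "_ = distr (density ?P ?e) borel ?psi")
proof -
  interpret sigma_finite_measure \<nu> by fact
  have sp: "sets ?P = sets (borel \<Otimes>\<^sub>M borel)"
    by (intro sets_pair_measure_cong s\<nu>) simp
  have mpsi0: "?psi \<in> borel_measurable (borel \<Otimes>\<^sub>M borel)" by measurable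
  have mpsi: "?psi \<in> borel_measurable ?P"
    using measurable_cong_sets[OF sp refl] mpsi0 by blast
  have me: "?e \<in> borel_measurable ?P"
    using measurable_cong_sets[OF sp refl] by measurable
  show ?thesis
    unfolding Upsilon0_def
  proof (rule measure_of_borel)
    show "sets (distr (density ?P ?e) borel ?psi) = sets borel" by simp
    fix B :: "'a set" assume B: "B \<in> sets borel"
    have mprod: "(\<lambda>p. ?e p * indicator B (?psi p)) \<in> borel_measurable ?P"
      using me mpsi B by measurable
    have pre: "?psi -` B \<inter> space (density ?P ?e) \<in> sets ?P"
      using measurable_sets[OF mpsi B] by simp
    have "emeasure (distr (density ?P ?e) borel ?psi) B = emeasure (density ?P ?e) (?psi -` B \<inter> space (density ?P ?e))"
      by (rule emeasure_distr) (use mpsi B in auto)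
    also have "\<dots> = (\<integral>\<^sup>+p. ?e p * indicator (?psi -` B \<inter> space (density ?P ?e)) p \<partial>?P)"
      by (rule emeasure_density[OF me]) (use pre in simp)
    also have "\<dots> = (\<integral>\<^sup>+p. ?e p * indicator B (?psi p) \<partial>?P)"
      by (intro nn_integral_cong) (auto simp: space_pair_measure indicator_def split: prod.splits)
    also have "\<dots> = (\<integral>\<^sup>+u. (\<integral>\<^sup>+x. indicator {0<..} u * ennreal (exp (-u)) * indicator B (u *\<^sub>R x) \<partial>\<nu>) \<partial>lborel)"
      using nn_integral_fst[OF mprod] by simp
    also have "\<dots> = (\<integral>\<^sup>+u. indicator {0<..} u * emeasure \<nu> ((\<lambda>x. u *\<^sub>R x) -` B) * ennreal (exp (- u)) \<partial>lborel)"
    proof (rule nn_integral_cong)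
      fix u :: real
      have ms0: "(\<lambda>x::'a. u *\<^sub>R x) \<in> borel_measurable borel" by measurable
      have ms: "(\<lambda>x. u *\<^sub>R x) \<in> measurable \<nu> borel"
        using measurable_cong_sets[OF s\<nu> refl] ms0 by blast
      have spn: "space \<nu> = UNIV" using sets_eq_imp_space_eq[OF s\<nu>] by simp
      have ps: "(\<lambda>x. u *\<^sub>R x) -` B \<in> sets \<nu>"
        using measurable_sets[OF ms B] spn by simp
      have mi: "(\<lambda>x. indicator B (u *\<^sub>R x) :: ennreal) \<in> borel_measurable \<nu>"
        using measurable_compose[OF ms borel_measurable_indicator[OF B]] by (simp add: o_def)
      have "(\<integral>\<^sup>+x. indicator {0<..} u * ennreal (exp (-u)) * indicator B (u *\<^sub>R x) \<partial>\<nu>)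
          = indicator {0<..} u * ennreal (exp (-u)) * (\<integral>\<^sup>+x. indicator B (u *\<^sub>R x) \<partial>\<nu>)"
        by (rule nn_integral_cmult[OF mi])
      also have "(\<integral>\<^sup>+x. indicator B (u *\<^sub>R x) \<partial>\<nu>) = (\<integral>\<^sup>+x. indicator ((\<lambda>x. u *\<^sub>R x) -` B) x \<partial>\<nu>)"
        by (intro nn_integral_cong) (simp add: indicator_def)
      also have "\<dots> = emeasure \<nu> ((\<lambda>x. u *\<^sub>R x) -` B)"
        using ps by simp
      finally show "(\<integral>\<^sup>+x. indicator {0<..} u * ennreal (exp (-u)) * indicator B (u *\<^sub>R x) \<partial>\<nu>)
          = indicator {0<..} u * emeasure \<nu> ((\<lambda>x. u *\<^sub>R x) -` B) * ennreal (exp (- u))"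
        by (simp add: mult_ac)
    qed
    finally show "(\<integral>\<^sup>+u. indicator {0<..} u * emeasure \<nu> ((\<lambda>x. u *\<^sub>R x) -` B) * ennreal (exp (- u)) \<partial>lborel)
        = emeasure (distr (density ?P ?e) borel ?psi) B" by simp
  qed
qed

lemma Upsilon0_integral:
  fixes \<nu> :: "'a::euclidean_space measure" and H :: "'a \<Rightarrow> ennreal"
  assumes sf: "sigma_finite_measure \<nu>" and s\<nu>: "sets \<nu> = sets borel"
    and Hm: "H \<in> borel_measurable borel"
  shows "(\<integral>\<^sup>+y. H y \<partial>Upsilon0 \<nu>) = (\<integral>\<^sup>+x. (\<integral>\<^sup>+u. indicator {0<..} u * ennreal (exp (-u)) * H (u *\<^sub>R x) \<partial>lborel) \<partial>\<nu>)"
proof -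
  let ?P = "lborel \<Otimes>\<^sub>M \<nu>" and ?e = "\<lambda>(u::real,x::'a). indicator {0<..} u * ennreal (exp (-u))"
    and ?psi = "\<lambda>(u::real,x::'a). u *\<^sub>R x"
  interpret sigma_finite_measure \<nu> by fact
  interpret pair_sigma_finite lborel \<nu>
    unfolding pair_sigma_finite_def using sf lborel.sigma_finite_measure_axioms by simp
  have sp: "sets ?P = sets (borel \<Otimes>\<^sub>M borel)"
    by (intro sets_pair_measure_cong s\<nu>) simp
  have mpsi0: "?psi \<in> borel_measurable (borel \<Otimes>\<^sub>M borel)" by measurable
  have mpsi: "?psi \<in> borel_measurable ?P"
    using measurable_cong_sets[OF sp refl] mpsi0 by blast
  have me: "?e \<in> borel_measurable ?P"
    using measurable_cong_sets[OF sp refl] by measurable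
  have mH: "(\<lambda>p. H (?psi p)) \<in> borel_measurable ?P"
    by (rule measurable_compose[OF mpsi Hm])
  have mprod: "(\<lambda>(u,x). indicator {0<..} u * ennreal (exp (-u)) * H (u *\<^sub>R x)) \<in> borel_measurable ?P"
    using me mH by (simp add: case_prod_beta') measurable
  have "(\<integral>\<^sup>+y. H y \<partial>Upsilon0 \<nu>) = (\<integral>\<^sup>+p. H (?psi p) \<partial>density ?P ?e)"
    unfolding Upsilon0_distr[OF sf s\<nu>] by (rule nn_integral_distr) (use mpsi Hm in auto)
  also have "\<dots> = (\<integral>\<^sup>+p. ?e p * H (?psi p) \<partial>?P)"
    by (rule nn_integral_density[OF me mH])
  also have "\<dots> = (\<integral>\<^sup>+p. (\<lambda>(u,x). indicator {0<..} u * ennreal (exp (-u)) * H (u *\<^sub>R x)) p \<partial>?P)"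
    by (intro nn_integral_cong) (auto split: prod.splits)
  also have "\<dots> = (\<integral>\<^sup>+u. (\<integral>\<^sup>+x. indicator {0<..} u * ennreal (exp (-u)) * H (u *\<^sub>R x) \<partial>\<nu>) \<partial>lborel)"
    using sigma_finite_measure.nn_integral_fst[OF sf mprod] by simp
  also have "\<dots> = (\<integral>\<^sup>+x. (\<integral>\<^sup>+u. indicator {0<..} u * ennreal (exp (-u)) * H (u *\<^sub>R x) \<partial>lborel) \<partial>\<nu>)"
    using Fubini'[of "\<lambda>u x. indicator {0<..} u * ennreal (exp (-u)) * H (u *\<^sub>R x)"] mprod by simp
  finally show ?thesis .
qed



lemma levy_sigma_finite:
  fixes \<rho> :: "'a::euclidean_space measure"
  assumes L: "levy_measure \<rho>"
  shows "sigma_finite_measure \<rho>"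
proof
  have s\<rho>: "sets \<rho> = sets borel" and z: "emeasure \<rho> {0} = 0"
    and fin: "(\<integral>\<^sup>+ x. ennreal (min 1 (norm x ^ 2)) \<partial>\<rho>) < \<infinity>"
    using L unfolding levy_measure_def by auto
  have spn: "space \<rho> = UNIV" using sets_eq_imp_space_eq[OF s\<rho>] by simp
  define S where "S n = {x::'a. 1 / real (Suc n) < norm x}" for n
  have Sb: "S n \<in> sets \<rho>" for n
    unfolding s\<rho> S_def by measurable
  have Sfin: "emeasure \<rho> (S n) \<noteq> \<infinity>" for n
  proof -
    have mf: "(\<lambda>x::'a. ennreal (min 1 (norm x ^ 2))) \<in> borel_measurable \<rho>"
      using measurable_cong_sets[OF s\<rho> refl] by (simp add: measurable_cong_sets[OF s\<rho> refl])
    have le: "indicator (S n) x \<le> ennreal (real (Suc n) ^ 2) * ennreal (min 1 (norm x ^ 2))" for x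
    proof (cases "x \<in> S n")
      case True
      hence "1 / real (Suc n) < norm x" by (simp add: S_def)
      hence "(1 / real (Suc n))^2 \<le> (norm x)^2"
        by (intro power_mono) auto
      hence "1 \<le> real (Suc n) ^ 2 * norm x ^ 2"
        by (simp add: power_divide field_simps)
      moreover have "1 \<le> real (Suc n) ^ 2 * 1" by simp
      ultimately have "1 \<le> real (Suc n) ^ 2 * min 1 (norm x ^ 2)"
        by (simp add: min_def)
      hence "ennreal 1 \<le> ennreal (real (Suc n) ^ 2 * min 1 (norm x ^ 2))"
        by (rule ennreal_leI)
      thus ?thesis using True by (simp add: ennreal_mult')
    qed simp
    have "emeasure \<rho> (S n) = (\<integral>\<^sup>+x. indicator (S n) x \<partial>\<rho>)" using Sb by simp
    also have "\<dots> \<le> (\<integral>\<^sup>+x. ennreal (real (Suc n) ^ 2) * ennreal (min 1 (norm x ^ 2)) \<partial>\<rho>)"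
      by (intro nn_integral_mono le)
    also have "\<dots> = ennreal (real (Suc n) ^ 2) * (\<integral>\<^sup>+x. ennreal (min 1 (norm x ^ 2)) \<partial>\<rho>)"
      by (rule nn_integral_cmult) (simp add: measurable_cong_sets[OF s\<rho> refl])
    also have "\<dots> < \<infinity>" using fin by (simp add: ennreal_mult_less_top)
    finally show ?thesis by simp
  qed
  show "\<exists>A. countable A \<and> A \<subseteq> sets \<rho> \<and> \<Union>A = space \<rho> \<and> (\<forall>a\<in>A. emeasure \<rho> a \<noteq> \<infinity>)"
  proof (intro exI[of _ "insert {0} (range S)"] conjI)
    show "countable (insert {0} (range S))" by simp
    show "insert {0} (range S) \<subseteq> sets \<rho>" using Sb by (auto simp: s\<rho>)
    show "\<Union>(insert {0} (range S)) = space \<rho>"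
    proof (rule set_eqI)
      fix x :: 'a
      show "x \<in> \<Union>(insert {0} (range S)) \<longleftrightarrow> x \<in> space \<rho>"
      proof (cases "x = 0")
        case False
        hence "norm x > 0" by simp
        then obtain n where "1 / real (Suc n) < norm x"
          using reals_Archimedean by (metis inverse_eq_divide)
        thus ?thesis using spn by (auto simp: S_def)
      qed (simp add: spn)
    qed
    show "\<forall>a\<in>insert {0} (range S). emeasure \<rho> a \<noteq> \<infinity>" using z Sfin by auto
  qed
qed



lemma phi_meas[measurable]:
  assumes [measurable]: "f \<in> borel_measurable M" "g \<in> borel_measurable M"
  shows "(\<lambda>w. phi (f w) (g w)) \<in> borel_measurable M"
  unfolding phi_def by measurable

lemma hh_meas[measurable]:
  assumes [measurable]: "f \<in> borel_measurable M" "g \<in> borel_measurable M"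
  shows "(\<lambda>w. hh (f w) (g w)) \<in> borel_measurable M"
  unfolding hh_def by measurable

lemma sets_A1[simp]: "sets (A1 \<nu>) = sets (borel :: 'a::euclidean_space measure)"
  unfolding A1_def using sets.sigma_sets_eq[of "borel :: 'a measure"] by (simp add: sets_measure_of_conv)

lemma sets_Upsilon0[simp]: "sets (Upsilon0 \<nu>) = sets (borel :: 'a::euclidean_space measure)"
  unfolding Upsilon0_def using sets.sigma_sets_eq[of "borel :: 'a measure"] by (simp add: sets_measure_of_conv)

lemma pointwise:
  fixes x :: "'a::euclidean_space" and B :: "'a set"
  assumes B[measurable]: "B \<in> sets borel"
  shows "(\<integral>\<^sup>+s. indicator {0<..} s * ennreal (2 * s * exp(-(s^2))) *
             (\<integral>\<^sup>+r. hh x r * indicator B (s *\<^sub>R phi x r) \<partial>lborel) \<partial>lborel)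
       = (\<integral>\<^sup>+u. indicator {0<..} u * ennreal (exp (-u)) *
             (\<integral>\<^sup>+r. hh (u *\<^sub>R x) r * indicator B (phi (u *\<^sub>R x) r) \<partial>lborel) \<partial>lborel)"
proof (cases "x = 0")
  case True thus ?thesis by (simp add: hh_def)
next
  case False
  define t where "t = norm x"
  have t: "t > 0" using False by (simp add: t_def)
  define G where "G r = (indicator B ((r / t) *\<^sub>R x) :: ennreal)" for r
  have Gm[measurable]: "G \<in> borel_measurable borel" unfolding G_def by measurable
  have L: "(\<integral>\<^sup>+r. hh x r * indicator B (s *\<^sub>R phi x r) \<partial>lborel)
         = (\<integral>\<^sup>+r. indicator {0<..} r * ennreal (a1 r t) * G (s * r) \<partial>lborel)" for s
    by (intro nn_integral_cong) (simp add: hh_def phi_def G_def False t_def mult.assoc)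
  have R: "indicator {0<..} u * ennreal (exp (-u)) *
             (\<integral>\<^sup>+r. hh (u *\<^sub>R x) r * indicator B (phi (u *\<^sub>R x) r) \<partial>lborel)
         = indicator {0<..} u * ennreal (exp (-u)) *
             (\<integral>\<^sup>+r. indicator {0<..} r * ennreal (a1 r (u*t)) * G r \<partial>lborel)" for u
  proof (cases "u > 0")
    case True
    have "(\<integral>\<^sup>+r. hh (u *\<^sub>R x) r * indicator B (phi (u *\<^sub>R x) r) \<partial>lborel)
        = (\<integral>\<^sup>+r. indicator {0<..} r * ennreal (a1 r (u*t)) * G r \<partial>lborel)"
    proof (intro nn_integral_cong)
      fix r
      have n: "norm (u *\<^sub>R x) = u * t" using True by (simp add: t_def)
      have p: "phi (u *\<^sub>R x) r = (r / t) *\<^sub>R x" unfolding phi_def n using True t by simp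
      have nz: "u *\<^sub>R x \<noteq> 0" using True False by simp
      show "hh (u *\<^sub>R x) r * indicator B (phi (u *\<^sub>R x) r) = indicator {0<..} r * ennreal (a1 r (u*t)) * G r"
        unfolding p hh_def n G_def using nz by simp
    qed
    thus ?thesis by simp
  qed simp
  have "(\<integral>\<^sup>+s. indicator {0<..} s * ennreal (2 * s * exp(-(s^2))) *
             (\<integral>\<^sup>+r. hh x r * indicator B (s *\<^sub>R phi x r) \<partial>lborel) \<partial>lborel)
      = (\<integral>\<^sup>+s. indicator {0<..} s * ennreal (2 * s * exp(-(s^2))) *
             (\<integral>\<^sup>+r. indicator {0<..} r * ennreal (a1 r t) * G (s * r) \<partial>lborel) \<partial>lborel)"
    by (simp only: L)
  also have "\<dots> = (\<integral>\<^sup>+u. indicator {0<..} u * ennreal (exp (-u)) *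
            (\<integral>\<^sup>+r. indicator {0<..} r * ennreal (a1 r (u*t)) * G r \<partial>lborel) \<partial>lborel)"
    by (rule core[OF Gm t])
  also have "\<dots> = (\<integral>\<^sup>+u. indicator {0<..} u * ennreal (exp (-u)) *
             (\<integral>\<^sup>+r. hh (u *\<^sub>R x) r * indicator B (phi (u *\<^sub>R x) r) \<partial>lborel) \<partial>lborel)"
    by (simp only: R)
  finally show ?thesis .
qed



theorem theorem3p7:
  fixes \<rho> :: "'a::euclidean_space measure"
  assumes "levy_measure_L1 \<rho>"
  shows "Upsilon_m2_2 (A1 \<rho>) = A1 (Upsilon0 \<rho>)"
proof -
  have L: "levy_measure \<rho>" using assms unfolding levy_measure_L1_def by simp
  have s\<rho>: "sets \<rho> = sets borel" using L unfolding levy_measure_def by simp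
  have sf: "sigma_finite_measure \<rho>" by (rule levy_sigma_finite[OF L])
  interpret pair_sigma_finite lborel \<rho>
    unfolding pair_sigma_finite_def using sf lborel.sigma_finite_measure_axioms by simp
  have spn: "space \<rho> = UNIV" using sets_eq_imp_space_eq[OF s\<rho>] by simp
  show ?thesis
    unfolding Upsilon_m2_2_def
  proof (rule measure_of_borel)
    show "sets (A1 (Upsilon0 \<rho>)) = sets borel" by simp
    fix B :: "'a set" assume B[measurable]: "B \<in> sets borel"
    define K where "K s x = (\<integral>\<^sup>+r. hh x r * indicator B (s *\<^sub>R phi x r) \<partial>lborel)" for s x
    have Km0: "(\<lambda>(s, x). K s x) \<in> borel_measurable (borel \<Otimes>\<^sub>M borel)"
      unfolding K_def by measurable
    have sp: "sets (lborel \<Otimes>\<^sub>M \<rho>) = sets (borel \<Otimes>\<^sub>M borel)"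
      by (intro sets_pair_measure_cong s\<rho>) simp
    have Km: "(\<lambda>(s, x). K s x) \<in> borel_measurable (lborel \<Otimes>\<^sub>M \<rho>)"
      using measurable_cong_sets[OF sp refl] Km0 by blast
    have Fm0: "(\<lambda>(s, x). indicator {0<..} s * ennreal (2 * s * exp (- (s^2))) * K s x) \<in> borel_measurable (borel \<Otimes>\<^sub>M borel)"
      using Km0 by measurable
    have Fm: "(\<lambda>(s, x). indicator {0<..} s * ennreal (2 * s * exp (- (s^2))) * K s x) \<in> borel_measurable (lborel \<Otimes>\<^sub>M \<rho>)"
      using measurable_cong_sets[OF sp refl] Fm0 by blast
    have Ksm: "K s \<in> borel_measurable \<rho>" for s
    proof -
      have "(\<lambda>x. K s x) \<in> borel_measurable borel"
        using measurable_compose_Pair1[OF _ Km0, of s] by simp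
      thus ?thesis using measurable_cong_sets[OF s\<rho> refl] by blast
    qed
    have "(\<integral>\<^sup>+s. indicator {0<..} s * emeasure (A1 \<rho>) ((\<lambda>x. s *\<^sub>R x) -` B) * ennreal (2 * s * exp (- (s^2))) \<partial>lborel)
        = (\<integral>\<^sup>+s. indicator {0<..} s * ennreal (2 * s * exp (- (s^2))) * (\<integral>\<^sup>+x. K s x \<partial>\<rho>) \<partial>lborel)"
    proof (rule nn_integral_cong)
      fix s :: real
      have pb: "(\<lambda>x::'a. s *\<^sub>R x) -` B \<in> sets borel"
        using measurable_sets[of "\<lambda>x::'a. s *\<^sub>R x" borel borel B] B by simp
      have "emeasure (A1 \<rho>) ((\<lambda>x. s *\<^sub>R x) -` B) = (\<integral>\<^sup>+x. K s x \<partial>\<rho>)"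
        unfolding A1_emeasure[OF s\<rho> pb] K_def
        by (intro nn_integral_cong) (simp add: indicator_def)
      thus "indicator {0<..} s * emeasure (A1 \<rho>) ((\<lambda>x. s *\<^sub>R x) -` B) * ennreal (2 * s * exp (- (s^2)))
          = indicator {0<..} s * ennreal (2 * s * exp (- (s^2))) * (\<integral>\<^sup>+x. K s x \<partial>\<rho>)"
        by (simp add: mult_ac)
    qed
    also have "\<dots> = (\<integral>\<^sup>+s. (\<integral>\<^sup>+x. indicator {0<..} s * ennreal (2 * s * exp (- (s^2))) * K s x \<partial>\<rho>) \<partial>lborel)"
      by (intro nn_integral_cong nn_integral_cmult[symmetric] Ksm)
    also have "\<dots> = (\<integral>\<^sup>+x. (\<integral>\<^sup>+s. indicator {0<..} s * ennreal (2 * s * exp (- (s^2))) * K s x \<partial>lborel) \<partial>\<rho>)"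
      using Fubini'[of "\<lambda>s x. indicator {0<..} s * ennreal (2 * s * exp (- (s^2))) * K s x"] Fm by simp
    also have "\<dots> = (\<integral>\<^sup>+x. (\<integral>\<^sup>+u. indicator {0<..} u * ennreal (exp (-u)) *
             (\<integral>\<^sup>+r. hh (u *\<^sub>R x) r * indicator B (phi (u *\<^sub>R x) r) \<partial>lborel) \<partial>lborel) \<partial>\<rho>)"
      unfolding K_def by (intro nn_integral_cong pointwise B)
    also have "\<dots> = (\<integral>\<^sup>+y. (\<integral>\<^sup>+r. hh y r * indicator B (phi y r) \<partial>lborel) \<partial>Upsilon0 \<rho>)"
      by (rule Upsilon0_integral[OF sf s\<rho>, symmetric]) measurable
    also have "\<dots> = emeasure (A1 (Upsilon0 \<rho>)) B"
      by (rule A1_emeasure[symmetric]) (simp_all add: B)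
    finally show "(\<integral>\<^sup>+s. indicator {0<..} s * emeasure (A1 \<rho>) ((\<lambda>x. s *\<^sub>R x) -` B) * ennreal (2 * s * exp (- (s^2))) \<partial>lborel)
        = emeasure (A1 (Upsilon0 \<rho>)) B" .
  qed
qed

end
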